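(* For a topologically reasonable pointclass $\Gamma$, if every set in $\Gamma$ is strongly $u$-regular, then every set in $\Gamma$ is $\ell$-regular.
   Context: A set $A\subseteq\omega^\omega$ is dominating if for every $g\in\omega^\omega$ there is $x\in A$ with $g(n)\le x(n)$ for all but finitely many $n$. $A$ is strongly dominating if for every $f\in\omega^\omega$ there is $x\in A$ with $f(x(k-1))<x(k)$ for all but finitely many $k$. A Laver tree is a tree $L\subseteq\omega^{<\omega}$ all of whose nodes extending the stem have infinitely many immediate successors. $A$ is $\ell$-regular if either $A$ contains $[L]$ for some Laver tree $L$, or $A$ is not strongly dominating. A nice set: let $\bar W=\langle w_\sigma,s_\sigma:\sigma\in\omega^{<\omega}\rangle$ be such that $\mathrm{dom}(s_{\langle\rangle})$ and each $w_\sigma$ are finite subsets of $\omega$; $s_{\langle\rangle}:\mathrm{dom}(s_{\langle\rangle})\to\omega$ and for $\sigma\neq\langle\rangle$, $s_\sigma:w_{\sigma{\restriction}(|\sigma|-1)}\to\omega$; for every $f\in\omega^\omega$, $\omega=\mathrm{dom}(s_{\langle\rangle})\cup\bigcup_n w_{f{\restriction}n}$ with the union pairwise disjoint; and $s_\sigma(i)>\sigma(|\sigma|-1)$ for all $\sigma\ne\langle\rangle$ and $i\in w_{\sigma{\restriction}(|\sigma|-1)}$. Then $C(\bar W)=\{\bigcup_n s_{f{\restriction}n}: f\in\omega^\omega\}$ is called a nice set. $A$ is strongly $u$-regular if either $A$ contains a nice set or $A$ is not dominating. A pointclass $\Gamma$ is topologically reasonable if it is closed under continuous preimages and $A\cap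 Q\in\Gamma$ whenever $A\in\Gamma$ and $Q$ is closed. *)

theory Defs
  imports "HOL-Analysis.Analysis" "HOL-Library.Sublist"
begin

text \<open>Baire space: functions nat \<Rightarrow> nat with the product topology (library instance),
  nat carrying its discrete topology. Finite sequences are lists of naturals.\<close>

definition restr :: "(nat \<Rightarrow> nat) \<Rightarrow> nat \<Rightarrow> nat list" where
  "restr x n = map x [0..<n]"

definition dominating :: "(nat \<Rightarrow> nat) set \<Rightarrow> bool" where
  "dominating A \<longleftrightarrow> (\<forall>g. \<exists>x\<in>A. \<forall>\<^sub>F n in sequentially. g n \<le> x n)"

text \<open>f(x(k-1)) < x(k) for almost all k, written with k = Suc j.\<close>
definition strongly_dominating :: "(nat \<Rightarrow> nat) set \<Rightarrow> bool" where
  "strongly_dominating A \<longleftrightarrow>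
     (\<forall>f. \<exists>x\<in>A. \<forall>\<^sub>F k in sequentially. f (x k) < x (Suc k))"

definition laver_tree :: "nat list set \<Rightarrow> bool" where
  "laver_tree L \<longleftrightarrow>
     (\<forall>t\<in>L. \<forall>u. prefix u t \<longrightarrow> u \<in> L) \<and>
     (\<exists>s\<in>L. (\<forall>t\<in>L. prefix t s \<or> prefix s t) \<and>
            (\<forall>t\<in>L. prefix s t \<longrightarrow> infinite {n. t @ [n] \<in> L}))"

definition tree_body :: "nat list set \<Rightarrow> (nat \<Rightarrow> nat) set" where
  "tree_body L = {x. \<forall>n. restr x n \<in> L}"

definition ell_regular :: "(nat \<Rightarrow> nat) set \<Rightarrow> bool" where
  "ell_regular A \<longleftrightarrow> (\<exists>L. laver_tree L \<and> tree_body L \<subseteq> A) \<or> \<not> strongly_dominating A"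

text \<open>A system W = (w_\<sigma>, s_\<sigma>); s_\<sigma> is a finite partial function (map).\<close>
definition nice_system :: "(nat list \<Rightarrow> nat set) \<Rightarrow> (nat list \<Rightarrow> (nat \<rightharpoonup> nat)) \<Rightarrow> bool" where
  "nice_system w s \<longleftrightarrow>
     finite (dom (s [])) \<and>
     (\<forall>\<sigma>. finite (w \<sigma>)) \<and>
     (\<forall>\<sigma>. \<sigma> \<noteq> [] \<longrightarrow> dom (s \<sigma>) = w (butlast \<sigma>)) \<and>
     (\<forall>f. dom (s []) \<union> (\<Union>n. w (restr f n)) = UNIV \<and>
          (\<forall>n. dom (s []) \<inter> w (restr f n) = {}) \<and>
          (\<forall>n m. n \<noteq> m \<longrightarrow> w (restr f n) \<inter> w (restr f m) = {})) \<and>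
     (\<forall>\<sigma> i. \<sigma> \<noteq> [] \<longrightarrow> i \<in> w (butlast \<sigma>) \<longrightarrow> the (s \<sigma> i) > last \<sigma>)"

text \<open>C(W): the functions \<Union>n s_{f|n}, for f in Baire space.\<close>
definition nice_set :: "(nat list \<Rightarrow> (nat \<rightharpoonup> nat)) \<Rightarrow> (nat \<Rightarrow> nat) set" where
  "nice_set s = {x. \<exists>f. \<forall>n i. i \<in> dom (s (restr f n)) \<longrightarrow> s (restr f n) i = Some (x i)}"

definition strongly_u_regular :: "(nat \<Rightarrow> nat) set \<Rightarrow> bool" where
  "strongly_u_regular A \<longleftrightarrow> (\<exists>w s. nice_system w s \<and> nice_set s \<subseteq> A) \<or> \<not> dominating A"

definition topologically_reasonable :: "(nat \<Rightarrow> nat) set set \<Rightarrow> bool" where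
  "topologically_reasonable \<Gamma> \<longleftrightarrow>
     (\<forall>A\<in>\<Gamma>. \<forall>h::(nat \<Rightarrow> nat) \<Rightarrow> (nat \<Rightarrow> nat). continuous_on UNIV h \<longrightarrow> h -` A \<in> \<Gamma>) \<and>
     (\<forall>A\<in>\<Gamma>. \<forall>Q. closed Q \<longrightarrow> A \<inter> Q \<in> \<Gamma>)"

end

theory Submission
  imports Defs
begin

fun ypos :: "(nat \<Rightarrow> nat) \<Rightarrow> nat \<Rightarrow> nat" where
  "ypos y 0 = 0"
| "ypos y (Suc k) = ypos y k + 1 + y (ypos y k)"

definition HH :: "(nat \<Rightarrow> nat) \<Rightarrow> (nat \<Rightarrow> nat)" where
  "HH y = (\<lambda>k. y (ypos y k))"

fun zpos :: "(nat \<Rightarrow> nat) \<Rightarrow> nat \<Rightarrow> nat" where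
  "zpos z 0 = 0"
| "zpos z (Suc k) = zpos z k + 1 + z k"

lemma ypos_zpos: "ypos y k = zpos (HH y) k"
  by (induction k) (auto simp: HH_def)

lemma ypos_mono: "j \<le> k \<Longrightarrow> ypos y j \<le> ypos y k"
  by (induction k) (auto simp: le_Suc_eq)

lemma zpos_mono: "j \<le> k \<Longrightarrow> zpos y j \<le> zpos y k"
  by (induction k) (auto simp: le_Suc_eq)

lemma zpos_strict: "j < k \<Longrightarrow> zpos y j < zpos y k"
  by (induction k) (auto simp: less_Suc_eq)

lemma ypos_local:
  assumes "\<forall>i\<le>ypos y0 k. y i = y0 i" "j \<le> k"
  shows "ypos y j = ypos y0 j"
  using assms(2)
proof (induction j)
  case 0 then show ?case by simp
next
  case (Suc j)
  then have "ypos y j = ypos y0 j" by simp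
  moreover have "ypos y0 j \<le> ypos y0 k" using Suc.prems ypos_mono by simp
  ultimately show ?case using assms(1) by simp
qed

lemma open_coord: "open {y::nat\<Rightarrow>nat. y i = c}"
proof -
  have "{y::nat\<Rightarrow>nat. y i = c} = (\<lambda>y. y i) -` {c}" by auto
  moreover have "open ((\<lambda>y::nat\<Rightarrow>nat. y i) -` {c})"
    using continuous_on_open_vimage[of UNIV "\<lambda>y::nat\<Rightarrow>nat. y i"] open_discrete
    by auto
  ultimately show ?thesis by simp
qed

lemma open_nbhd: "open {y::nat\<Rightarrow>nat. \<forall>i\<le>N. y i = y0 i}"
proof -
  have "{y::nat\<Rightarrow>nat. \<forall>i\<le>N. y i = y0 i} = (\<Inter>i\<in>{..N}. {y. y i = y0 i})" by auto
  then show ?thesis using open_coord by (auto intro!: open_INT)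
qed

lemma HH_cont: "continuous_on UNIV HH"
proof (rule continuous_on_coordinatewise_then_product)
  fix k
  show "continuous_on UNIV (\<lambda>y. HH y k)"
    unfolding continuous_on_topological
  proof (intro ballI allI impI)
    fix y0 :: "nat \<Rightarrow> nat" and B :: "nat set"
    assume "open B" "HH y0 k \<in> B"
    let ?A = "{y::nat\<Rightarrow>nat. \<forall>i\<le>ypos y0 k. y i = y0 i}"
    have "\<forall>y\<in>UNIV. y \<in> ?A \<longrightarrow> HH y k \<in> B"
    proof (intro ballI impI)
      fix y assume "y \<in> ?A"
      then have "ypos y k = ypos y0 k" using ypos_local by blast
      then have "HH y k = HH y0 k" using \<open>y \<in> ?A\<close> by (simp add: HH_def)
      then show "HH y k \<in> B" using \<open>HH y0 k \<in> B\<close> by simp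
    qed
    then show "\<exists>A. open A \<and> y0 \<in> A \<and> (\<forall>y\<in>UNIV. y \<in> A \<longrightarrow> HH y k \<in> B)"
      using open_nbhd by blast
  qed
qed

lemma g_le_G: "j \<le> n \<Longrightarrow> (g::nat\<Rightarrow>nat) j \<le> (\<Sum>i\<le>n. g i)"
  by (rule member_le_sum) auto

lemma dom_lemma:
  assumes "strongly_dominating A"
  shows "dominating (HH -` A)"
  unfolding dominating_def
proof
  fix g :: "nat \<Rightarrow> nat"
  define G where "G n = (\<Sum>i\<le>n. g i)" for n
  define f where "f n = G (3*n) + 2*n + 1" for n
  obtain x where xA: "x \<in> A" and ev: "\<forall>\<^sub>F k in sequentially. f (x k) < x (Suc k)"
    using assms unfolding strongly_dominating_def by blast
  obtain K where K: "\<And>k. k \<ge> K \<Longrightarrow> f (x k) < x (Suc k)"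
    using ev unfolding eventually_sequentially by blast
  have sm: "strict_mono (zpos x)" by (simp add: strict_monoI zpos_strict)
  then have inj: "inj (zpos x)" by (rule strict_mono_imp_inj_on)
  define y where "y i = (if i \<in> range (zpos x) then x (inv (zpos x) i) else g i)" for i
  have yz: "y (zpos x k) = x k" for k
    using inj by (simp add: y_def)
  have yp: "ypos y k = zpos x k" for k
    by (induction k) (simp_all add: yz)
  have "HH y = x" by (rule ext) (simp add: HH_def yp yz)
  then have yB: "y \<in> HH -` A" using xA by simp
  define c where "c = zpos x K + 1"
  have c1: "zpos x (Suc k) \<le> 2 * x k + c" if "k \<ge> K" for k
    using that
  proof (induction k rule: dec_induct)
    case base then show ?case by (simp add: c_def)
  next
    case (step k)
    have "f (x k) < x (Suc k)" using K step.hyps(1) by simp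
    then have "2 * x k + 1 \<le> x (Suc k)" by (simp add: f_def)
    then show ?case using step.IH by simp
  qed
  have c2: "x k + K \<ge> k" if "k \<ge> K" for k
    using that
  proof (induction k rule: dec_induct)
    case base then show ?case by simp
  next
    case (step k)
    have "f (x k) < x (Suc k)" using K step.hyps(1) by simp
    then have "x k < x (Suc k)" by (simp add: f_def)
    then show ?case using step.IH by simp
  qed
  have c3: "g (zpos x k) \<le> x k" if kge: "k \<ge> Suc (K + c)" for k
  proof -
    obtain k' where k': "k = Suc k'" "k' \<ge> K + c" using kge by (cases k) auto
    then have "x k' \<ge> c" using c2[of k'] by simp
    then have "zpos x k \<le> 3 * x k'" using c1[of k'] k' by simp
    then have "g (zpos x k) \<le> G (3 * x k')" unfolding G_def by (rule g_le_G)
    also have "\<dots> < x k" using K[of k'] k' by (simp add: f_def)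
    finally show ?thesis by simp
  qed
  have "\<forall>i\<ge>zpos x (Suc (K + c)). g i \<le> y i"
  proof (intro allI impI)
    fix i assume i: "i \<ge> zpos x (Suc (K + c))"
    show "g i \<le> y i"
    proof (cases "i \<in> range (zpos x)")
      case True
      then obtain k where k: "i = zpos x k" by blast
      have "k \<ge> Suc (K + c)"
      proof (rule ccontr)
        assume "\<not> ?thesis"
        then have "zpos x k < zpos x (Suc (K + c))" using zpos_strict[of k "Suc (K + c)" x] by linarith
        then show False using i k by simp
      qed
      then show ?thesis using c3 k yz by simp
    next
      case False then show ?thesis by (simp add: y_def)
    qed
  qed
  then have "\<forall>\<^sub>F n in sequentially. g n \<le> y n"
    unfolding eventually_sequentially by blast
  then show "\<exists>y\<in>HH -` A. \<forall>\<^sub>F n in sequentially. g n \<le> y n" using yB by blast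
qed

lemma zpos_cong: "(\<forall>i<j. z i = z' i) \<Longrightarrow> zpos z j = zpos z' j"
  by (induction j) auto

definition lpos :: "nat list \<Rightarrow> nat \<Rightarrow> nat" where
  "lpos t j = zpos (\<lambda>i. t ! i) j"

lemma lpos_prefix: "prefix u u' \<Longrightarrow> j \<le> length u \<Longrightarrow> lpos u j = lpos u' j"
  unfolding lpos_def
  by (rule zpos_cong) (auto simp: prefix_def nth_append)

lemma lpos_snoc_Suc: "lpos (t @ [v]) (Suc (length t)) = lpos t (length t) + 1 + v"
proof -
  have "lpos (t @ [v]) (length t) = lpos t (length t)"
    by (rule lpos_prefix[symmetric]) auto
  then show ?thesis by (simp add: lpos_def)
qed

lemma lpos_restr: "j \<le> n \<Longrightarrow> lpos (restr z n) j = zpos z j"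
  unfolding lpos_def restr_def
  by (rule zpos_cong) auto

lemma prefix_nth: "prefix xs ys \<Longrightarrow> j < length xs \<Longrightarrow> xs ! j = ys ! j"
  by (auto simp: prefix_def nth_append)

context
  fixes w :: "nat list \<Rightarrow> nat set" and s :: "nat list \<Rightarrow> (nat \<rightharpoonup> nat)"
  assumes ns: "nice_system w s"
begin

definition decided :: "nat list \<Rightarrow> nat set" where
  "decided \<phi> = dom (s []) \<union> (\<Union>j<length \<phi>. w (take j \<phi>))"

definition bnd :: "nat list \<Rightarrow> nat" where
  "bnd \<psi> = Suc (Max (insert 0 (dom (s []) \<union> (\<Union>j\<le>length \<psi>. w (take j \<psi>)))))"

lemma fin_D0: "finite (dom (s []))" using ns by (simp add: nice_system_def)
lemma fin_w: "finite (w \<sigma>)" using ns by (simp add: nice_system_def)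

lemma decided_snoc: "decided (\<psi> @ [c]) = decided \<psi> \<union> w \<psi>"
proof -
  have "(\<Union>j<length (\<psi> @ [c]). w (take j (\<psi> @ [c]))) = (\<Union>j<Suc (length \<psi>). w (take j \<psi>))"
    by (rule SUP_cong) auto
  also have "\<dots> = (\<Union>j<length \<psi>. w (take j \<psi>)) \<union> w \<psi>"
    by (simp add: lessThan_Suc Un_commute)
  finally show ?thesis by (auto simp: decided_def)
qed

lemma bnd_gt: "i \<in> decided (\<psi> @ [c]) \<Longrightarrow> i < bnd \<psi>"
proof -
  assume "i \<in> decided (\<psi> @ [c])"
  then have "i \<in> decided \<psi> \<or> i \<in> w \<psi>" unfolding decided_snoc by blast
  then have "i \<in> dom (s []) \<union> (\<Union>j\<le>length \<psi>. w (take j \<psi>))"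
  proof
    assume "i \<in> w \<psi>"
    then have "i \<in> w (take (length \<psi>) \<psi>)" by simp
    then show ?thesis by blast
  qed (auto simp: decided_def)
  moreover have "finite (insert 0 (dom (s []) \<union> (\<Union>j\<le>length \<psi>. w (take j \<psi>))))"
    using fin_D0 fin_w by auto
  ultimately show "i < bnd \<psi>" unfolding bnd_def
    by (meson Max_ge insertI2 le_imp_less_Suc)
qed

lemma D0_decided: "dom (s []) \<subseteq> decided \<phi>"
  by (auto simp: decided_def)

lemma decided_mono: "prefix \<phi> \<phi>' \<Longrightarrow> decided \<phi> \<subseteq> decided \<phi>'"
proof -
  assume "prefix \<phi> \<phi>'"
  then obtain r where r: "\<phi>' = \<phi> @ r" by (auto simp: prefix_def)
  show ?thesis unfolding decided_def
  proof (intro Un_mono subsetI)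
    fix x assume "x \<in> (\<Union>j<length \<phi>. w (take j \<phi>))"
    then obtain j where "j < length \<phi>" "x \<in> w (take j \<phi>)" by blast
    moreover have "take j \<phi>' = take j \<phi>" using r \<open>j < length \<phi>\<close> by simp
    ultimately show "x \<in> (\<Union>j<length \<phi>'. w (take j \<phi>'))" using r
      by (intro UN_I[of j]) auto
  qed simp
qed

primrec gr :: "nat list \<Rightarrow> nat \<Rightarrow> nat \<Rightarrow> nat list" where
  "gr \<phi> m 0 = \<phi>"
| "gr \<phi> m (Suc i) = gr \<phi> m i @ [max m (bnd (gr \<phi> m i))]"

lemma len_gr: "length (gr \<phi> m i) = length \<phi> + i"
  by (induction i) auto

lemma gr_prefix: "i \<le> i' \<Longrightarrow> prefix (gr \<phi> m i) (gr \<phi> m i')"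
proof (induction i' rule: dec_induct)
  case base then show ?case by simp
next
  case (step k) then show ?case by (auto intro: prefix_order.trans)
qed

definition Finf :: "nat list \<Rightarrow> nat \<Rightarrow> nat \<Rightarrow> nat" where
  "Finf \<phi> m j = gr \<phi> m (Suc j) ! j"

lemma Finf_gr: "j < length (gr \<phi> m i) \<Longrightarrow> Finf \<phi> m j = gr \<phi> m i ! j"
proof -
  assume j: "j < length (gr \<phi> m i)"
  let ?M = "max i (Suc j)"
  have "gr \<phi> m (Suc j) ! j = gr \<phi> m ?M ! j"
    by (rule prefix_nth[OF gr_prefix]) (auto simp: len_gr simp del: gr.simps)
  moreover have "gr \<phi> m i ! j = gr \<phi> m ?M ! j"
    by (rule prefix_nth) (use j in \<open>auto intro: gr_prefix\<close>)
  ultimately show ?thesis by (simp add: Finf_def)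
qed

lemma restr_Finf: "n \<le> length (gr \<phi> m i) \<Longrightarrow> restr (Finf \<phi> m) n = take n (gr \<phi> m i)"
  by (rule nth_equalityI) (auto simp: restr_def Finf_gr)

lemma stage_ex: "p \<notin> dom (s []) \<Longrightarrow> \<exists>i. p \<in> decided (gr \<phi> m i)"
proof -
  assume p: "p \<notin> dom (s [])"
  have "dom (s []) \<union> (\<Union>n. w (restr (Finf \<phi> m) n)) = UNIV"
    using ns by (simp add: nice_system_def)
  then have "p \<in> (\<Union>n. w (restr (Finf \<phi> m) n))" using p by blast
  then obtain n where n: "p \<in> w (restr (Finf \<phi> m) n)" by blast
  have "restr (Finf \<phi> m) n = take n (gr \<phi> m (Suc n))"
    by (rule restr_Finf) (simp add: len_gr)
  then have "p \<in> decided (gr \<phi> m (Suc n))" using n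
    by (auto simp: decided_def len_gr)
  then show ?thesis by blast
qed

definition ext :: "nat list \<Rightarrow> nat \<Rightarrow> nat \<Rightarrow> nat list" where
  "ext \<phi> p m = gr \<phi> m (LEAST i. p \<in> decided (gr \<phi> m i))"

definition val :: "nat list \<Rightarrow> nat \<Rightarrow> nat \<Rightarrow> nat" where
  "val \<phi> p m = the (s (ext \<phi> p m) p)"

definition Good :: "nat list \<Rightarrow> nat list \<Rightarrow> bool" where
  "Good t \<phi> \<longleftrightarrow>
    (\<forall>j<length t. (lpos t j \<in> dom (s []) \<and> s [] (lpos t j) = Some (t ! j)) \<or>
       (\<exists>n<length \<phi>. lpos t j \<in> w (take n \<phi>) \<and> s (take (Suc n) \<phi>) (lpos t j) = Some (t ! j)))
    \<and> lpos t (length t) \<notin> decided \<phi>"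

lemma step_lemma:
  assumes G: "Good t \<phi>"
  defines "p \<equiv> lpos t (length t)"
  shows "Good (t @ [val \<phi> p m]) (ext \<phi> p m) \<and> prefix \<phi> (ext \<phi> p m)
     \<and> length \<phi> < length (ext \<phi> p m) \<and> m < val \<phi> p m"
proof -
  have pnd: "p \<notin> decided \<phi>" using G by (simp add: Good_def p_def)
  then have "p \<notin> dom (s [])" using D0_decided by blast
  then obtain i0 where i0: "p \<in> decided (gr \<phi> m i0)" using stage_ex by blast
  define i where "i = (LEAST i. p \<in> decided (gr \<phi> m i))"
  have pi: "p \<in> decided (gr \<phi> m i)" unfolding i_def by (rule LeastI) (rule i0)
  have "i \<noteq> 0"
  proof
    assume "i = 0" then show False using pi pnd by simp
  qed
  then obtain i' where ii: "i = Suc i'" by (cases i) auto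
  have pi': "p \<notin> decided (gr \<phi> m i')"
    using not_less_Least[of i' "\<lambda>i. p \<in> decided (gr \<phi> m i)"] ii i_def by auto
  define \<psi> where "\<psi> = gr \<phi> m i'"
  define c where "c = max m (bnd \<psi>)"
  have ext_eq: "ext \<phi> p m = \<psi> @ [c]"
    by (simp add: ext_def i_def[symmetric] ii \<psi>_def c_def)
  have pw: "p \<in> w \<psi>" using pi pi' unfolding ii by (simp add: decided_snoc \<psi>_def)
  have "dom (s (\<psi> @ [c])) = w \<psi>" using ns by (simp add: nice_system_def)
  then obtain v where v: "s (\<psi> @ [c]) p = Some v" using pw by blast
  have vval: "val \<phi> p m = v" by (simp add: val_def ext_eq v)
  have "the (s (\<psi> @ [c]) p) > last (\<psi> @ [c])"
    using ns pw unfolding nice_system_def by (metis butlast_snoc snoc_eq_iff_butlast)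
  then have vc: "v > c" using v by simp
  have dec_lt: "\<forall>i\<in>decided (\<psi> @ [c]). i < v"
    using bnd_gt vc c_def by fastforce
  have pre: "prefix \<phi> (\<psi> @ [c])"
    using gr_prefix[of 0 "Suc i'" \<phi> m] by (simp add: \<psi>_def c_def)
  have len: "length \<phi> < length (\<psi> @ [c])" by (simp add: \<psi>_def len_gr)
  have lp: "lpos (t @ [v]) j = lpos t j" if "j \<le> length t" for j
    using lpos_prefix[of t "t @ [v]" j] that by simp
  have goodA: "(lpos (t@[v]) j \<in> dom (s []) \<and> s [] (lpos (t@[v]) j) = Some ((t@[v]) ! j)) \<or>
       (\<exists>n<length (\<psi> @ [c]). lpos (t@[v]) j \<in> w (take n (\<psi> @ [c])) \<and>
           s (take (Suc n) (\<psi> @ [c])) (lpos (t@[v]) j) = Some ((t@[v]) ! j))"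
    if j: "j < length (t @ [v])" for j
  proof (cases "j < length t")
    case True
    have lpj: "lpos (t@[v]) j = lpos t j" using lp True by simp
    have tj: "(t@[v]) ! j = t ! j" using True by (simp add: nth_append)
    from G True have "(lpos t j \<in> dom (s []) \<and> s [] (lpos t j) = Some (t ! j)) \<or>
       (\<exists>n<length \<phi>. lpos t j \<in> w (take n \<phi>) \<and> s (take (Suc n) \<phi>) (lpos t j) = Some (t ! j))"
      by (simp add: Good_def)
    then show ?thesis
    proof
      assume "lpos t j \<in> dom (s []) \<and> s [] (lpos t j) = Some (t ! j)"
      then show ?thesis using lpj tj by simp
    next
      assume "\<exists>n<length \<phi>. lpos t j \<in> w (take n \<phi>) \<and> s (take (Suc n) \<phi>) (lpos t j) = Some (t ! j)"
      then obtain n where n: "n < length \<phi>" "lpos t j \<in> w (take n \<phi>)"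
          "s (take (Suc n) \<phi>) (lpos t j) = Some (t ! j)" by blast
      obtain r where r: "\<psi> @ [c] = \<phi> @ r" using pre by (auto simp: prefix_def)
      have "take n (\<psi> @ [c]) = take n \<phi>" "take (Suc n) (\<psi> @ [c]) = take (Suc n) \<phi>"
        using n(1) r by auto
      then show ?thesis using n len lpj tj by (intro disjI2 exI[of _ n]) auto
    qed
  next
    case False
    then have jt: "j = length t" using j by simp
    have "lpos (t@[v]) j = p" using lp jt p_def by simp
    then show ?thesis using jt pw v
      by (intro disjI2 exI[of _ "length \<psi>"]) auto
  qed
  have "lpos (t @ [v]) (length (t @ [v])) = p + 1 + v"
    using lpos_snoc_Suc p_def by simp
  then have "lpos (t @ [v]) (length (t @ [v])) \<notin> decided (\<psi> @ [c])"
    using dec_lt by fastforce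
  then have "Good (t @ [v]) (\<psi> @ [c])" using goodA by (simp add: Good_def)
  then show ?thesis using ext_eq vval pre len vc c_def by simp
qed


lemma ypos_ge: "k \<le> ypos y k"
  by (induction k) auto

lemma stem_ex: "\<exists>t \<phi>. Good t \<phi>"
proof -
  define D0 where "D0 = dom (s [])"
  define y0 where "y0 i = the (s [] i)" for i
  define k1 where "k1 = Suc (Max (insert 0 D0))"
  have "ypos y0 k1 \<notin> D0"
  proof
    assume "ypos y0 k1 \<in> D0"
    then have "ypos y0 k1 \<le> Max (insert 0 D0)" using fin_D0 D0_def by simp
    then show False using ypos_ge[of k1 y0] k1_def by simp
  qed
  define k0 where "k0 = (LEAST k. ypos y0 k \<notin> D0)"
  have k0: "ypos y0 k0 \<notin> D0" unfolding k0_def by (rule LeastI) fact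
  have bel: "ypos y0 j \<in> D0" if "j < k0" for j
    using not_less_Least[of j "\<lambda>k. ypos y0 k \<notin> D0"] that k0_def by auto
  define t0 where "t0 = map (\<lambda>j. y0 (ypos y0 j)) [0..<k0]"
  have lt: "lpos t0 j = ypos y0 j" if "j \<le> k0" for j
    using that
  proof (induction j)
    case 0 then show ?case by (simp add: lpos_def)
  next
    case (Suc j)
    then have "lpos t0 j = ypos y0 j" by simp
    moreover have "t0 ! j = y0 (ypos y0 j)" using Suc.prems by (simp add: t0_def)
    ultimately show ?case by (simp add: lpos_def)
  qed
  have "Good t0 []"
    unfolding Good_def
  proof (intro conjI allI impI)
    fix j assume j: "j < length t0"
    then have jk: "j < k0" by (simp add: t0_def)
    have "lpos t0 j \<in> D0" using lt bel jk by simp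
    moreover have "t0 ! j = y0 (lpos t0 j)" using lt jk by (simp add: t0_def)
    ultimately show "(lpos t0 j \<in> dom (s []) \<and> s [] (lpos t0 j) = Some (t0 ! j)) \<or>
       (\<exists>n<length []. lpos t0 j \<in> w (take n []) \<and> s (take (Suc n) []) (lpos t0 j) = Some (t0 ! j))"
      by (auto simp: D0_def y0_def)
  next
    have "lpos t0 (length t0) = ypos y0 k0" using lt by (simp add: t0_def)
    then show "lpos t0 (length t0) \<notin> decided []" using k0 by (simp add: decided_def D0_def)
  qed
  then show ?thesis by blast
qed

lemma prefix_len_eq: "prefix xs ys \<Longrightarrow> length ys \<le> length xs \<Longrightarrow> xs = ys"
  by (auto simp: prefix_def)

lemma restr_prefix: "a \<le> b \<Longrightarrow> prefix (restr z a) (restr z b)"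
proof -
  assume "a \<le> b"
  then have "[0..<b] = [0..<a] @ [a..<b]" by (metis le0 upt_add_eq_append le_add_diff_inverse)
  then show ?thesis by (simp add: restr_def)
qed

lemma length_restr [simp]: "length (restr z n) = n" by (simp add: restr_def)

lemma restr_Suc: "restr f (Suc a) = restr f a @ [f a]" by (simp add: restr_def)

context
  fixes t0 \<phi>0 assumes g0: "Good t0 \<phi>0"
begin

primrec Phi :: "nat list \<Rightarrow> nat \<Rightarrow> nat list" where
  "Phi u 0 = \<phi>0"
| "Phi u (Suc k) = ext (Phi u k) (lpos u (length t0 + k))
      (LEAST m. val (Phi u k) (lpos u (length t0 + k)) m = u ! (length t0 + k))"

definition LL :: "nat list set" where
  "LL = {u. prefix u t0 \<or> (prefix t0 u \<and>
     (\<forall>k<length u - length t0. \<exists>m. val (Phi u k) (lpos u (length t0 + k)) m = u ! (length t0 + k)))}"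

lemma Phi_prefix: "prefix u u' \<Longrightarrow> length t0 + k \<le> length u \<Longrightarrow> Phi u k = Phi u' k"
proof (induction k)
  case 0 then show ?case by simp
next
  case (Suc k)
  then have "Phi u k = Phi u' k" by simp
  moreover have "lpos u (length t0 + k) = lpos u' (length t0 + k)"
    using Suc.prems by (intro lpos_prefix) auto
  moreover have "u ! (length t0 + k) = u' ! (length t0 + k)"
    using Suc.prems by (intro prefix_nth) auto
  ultimately show ?case by simp
qed

lemma Good_Phi_step:
  assumes uL: "u \<in> LL" and pu: "prefix t0 u" and k: "k < length u - length t0"
    and G: "Good (take (length t0 + k) u) (Phi u k)"
  shows "Good (take (length t0 + Suc k) u) (Phi u (Suc k)) \<and> prefix (Phi u k) (Phi u (Suc k))
     \<and> length (Phi u k) < length (Phi u (Suc k))"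
proof -
  define T where "T = length t0"
  define tk where "tk = take (T + k) u"
  define p where "p = lpos u (T + k)"
  have ltk: "length tk = T + k" using k by (simp add: tk_def T_def)
  have ptk: "lpos tk (length tk) = p"
    unfolding p_def ltk by (rule lpos_prefix) (use k in \<open>auto simp: tk_def ltk take_is_prefix T_def\<close>)
  have "\<exists>m. val (Phi u k) p m = u ! (T + k)"
    using uL pu k unfolding LL_def p_def T_def
    by (auto dest: prefix_len_eq prefix_length_le)
  then have L: "val (Phi u k) p (LEAST m. val (Phi u k) p m = u ! (T + k)) = u ! (T + k)"
    by (rule LeastI_ex)
  have st: "Good (tk @ [val (Phi u k) p (LEAST m. val (Phi u k) p m = u ! (T + k))])
        (ext (Phi u k) p (LEAST m. val (Phi u k) p m = u ! (T + k))) \<and>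
      prefix (Phi u k) (ext (Phi u k) p (LEAST m. val (Phi u k) p m = u ! (T + k))) \<and>
      length (Phi u k) < length (ext (Phi u k) p (LEAST m. val (Phi u k) p m = u ! (T + k)))"
    using step_lemma[of tk "Phi u k"] G ptk by (simp add: tk_def T_def)
  have "take (T + Suc k) u = tk @ [u ! (T + k)]"
    using k by (simp add: tk_def T_def take_Suc_conv_app_nth)
  then show ?thesis using st L by (simp add: T_def p_def)
qed

lemma Good_Phi:
  assumes uL: "u \<in> LL" and pu: "prefix t0 u"
  shows "k \<le> length u - length t0 \<Longrightarrow> Good (take (length t0 + k) u) (Phi u k)"
proof (induction k)
  case 0
  have "take (length t0) u = t0" using pu by (auto simp: prefix_def)
  then show ?case using g0 by simp
next
  case (Suc k)
  then show ?case using Good_Phi_step[OF uL pu] by simp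
qed

lemma LL_laver: "laver_tree LL"
  unfolding laver_tree_def
proof (intro conjI)
  show "\<forall>t\<in>LL. \<forall>u. prefix u t \<longrightarrow> u \<in> LL"
  proof (intro ballI allI impI)
    fix t u assume tL: "t \<in> LL" and ut: "prefix u t"
    show "u \<in> LL"
    proof (cases "prefix u t0")
      case True then show ?thesis by (simp add: LL_def)
    next
      case False
      have pt: "prefix t0 t" using tL False ut by (auto simp: LL_def intro: prefix_order.trans)
      then have pu: "prefix t0 u" using ut False prefix_same_cases by blast
      have "\<exists>m. val (Phi u k) (lpos u (length t0 + k)) m = u ! (length t0 + k)"
        if k: "k < length u - length t0" for k
      proof -
        have lu: "length u \<le> length t" using ut prefix_length_le by blast
        have "\<exists>m. val (Phi t k) (lpos t (length t0 + k)) m = t ! (length t0 + k)"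
          using tL k lu pt unfolding LL_def
          by (auto dest: prefix_len_eq prefix_length_le)
        moreover have "Phi u k = Phi t k" using k ut by (intro Phi_prefix) auto
        moreover have "lpos u (length t0 + k) = lpos t (length t0 + k)"
          using k ut by (intro lpos_prefix) auto
        moreover have "u ! (length t0 + k) = t ! (length t0 + k)"
          using k ut by (intro prefix_nth) auto
        ultimately show ?thesis by simp
      qed
      then show ?thesis using pu by (simp add: LL_def)
    qed
  qed
next
  show "\<exists>s\<in>LL. (\<forall>t\<in>LL. prefix t s \<or> prefix s t) \<and>
            (\<forall>t\<in>LL. prefix s t \<longrightarrow> infinite {n. t @ [n] \<in> LL})"
  proof (intro bexI[of _ t0] conjI ballI impI)
    show "t0 \<in> LL" by (simp add: LL_def)
  next
    fix t assume "t \<in> LL" then show "prefix t t0 \<or> prefix t0 t" by (auto simp: LL_def)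
  next
    fix t assume tL: "t \<in> LL" and pt: "prefix t0 t"
    define T where "T = length t0"
    define K where "K = length t - T"
    have lt: "length t = T + K" using pt prefix_length_le K_def T_def by fastforce
    have "take (T + K) t = t" using lt by simp
    then have G: "Good t (Phi t K)" using Good_Phi[OF tL pt, of K] K_def T_def by simp
    define p where "p = lpos t (length t)"
    have big: "m < val (Phi t K) p m" for m using step_lemma[OF G] p_def by blast
    have inL: "t @ [val (Phi t K) p m] \<in> LL" for m
    proof -
      define v where "v = val (Phi t K) p m"
      have "\<exists>m'. val (Phi (t @ [v]) k) (lpos (t @ [v]) (T + k)) m' = (t @ [v]) ! (T + k)"
        if k: "k < length (t @ [v]) - T" for k
      proof (cases "k < K")
        case True
        have "\<exists>m. val (Phi t k) (lpos t (T + k)) m = t ! (T + k)"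
          using tL True lt pt unfolding LL_def T_def
          by (auto dest: prefix_len_eq prefix_length_le)
        moreover have "Phi (t @ [v]) k = Phi t k" using True lt
          by (intro Phi_prefix[symmetric]) (auto simp: T_def)
        moreover have "lpos (t @ [v]) (T + k) = lpos t (T + k)" using True lt
          by (intro lpos_prefix[symmetric]) auto
        moreover have "(t @ [v]) ! (T + k) = t ! (T + k)" using True lt by (simp add: nth_append)
        ultimately show ?thesis by simp
      next
        case False
        then have kK: "k = K" using k lt by simp
        have "Phi (t @ [v]) K = Phi t K" using lt
          by (intro Phi_prefix[symmetric]) (auto simp: T_def)
        moreover have "lpos (t @ [v]) (T + K) = p"
          using lpos_prefix[of t "t @ [v]" "length t"] lt p_def by simp
        moreover have "(t @ [v]) ! (T + K) = v" using lt by (simp add: nth_append)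
        ultimately show ?thesis using kK v_def by auto
      qed
      moreover have "prefix t0 (t @ [v])" using pt by (auto intro: prefix_order.trans)
      ultimately show ?thesis by (simp add: LL_def T_def v_def)
    qed
    show "infinite {n. t @ [n] \<in> LL}"
      unfolding infinite_nat_iff_unbounded
      using inL big by blast
  qed
qed


lemma LL_body: "tree_body LL \<subseteq> HH ` nice_set s"
proof
  fix z assume "z \<in> tree_body LL"
  then have zL: "restr z n \<in> LL" for n by (simp add: tree_body_def)
  define T where "T = length t0"
  have pz: "prefix t0 (restr z n)" if "n \<ge> T" for n
  proof -
    have "prefix (restr z n) t0 \<or> prefix t0 (restr z n)" using zL[of n] by (auto simp: LL_def)
    then show ?thesis
    proof
      assume "prefix (restr z n) t0"
      then have "restr z n = t0" using that by (intro prefix_len_eq) (auto simp: T_def)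
      then show ?thesis by simp
    qed
  qed
  define phk where "phk k = Phi (restr z (T + k)) k" for k
  have A: "Phi (restr z N) k = phk k" if "N \<ge> T + k" for N k
    unfolding phk_def using that by (intro Phi_prefix[symmetric] restr_prefix) (auto simp: T_def)
  have B: "Good (restr z (T + k)) (phk k)" for k
    using Good_Phi[of "restr z (T + k)" k] zL[of "T + k"] pz[of "T + k"] by (simp add: phk_def T_def)
  have C: "prefix (phk k) (phk (Suc k)) \<and> length (phk k) < length (phk (Suc k))" for k
  proof -
    define u where "u = restr z (T + Suc k)"
    have G: "Good (take (length t0 + k) u) (Phi u k)"
      using Good_Phi[of u k] zL[of "T + Suc k"] pz[of "T + Suc k"] by (simp add: u_def T_def)
    have "prefix (Phi u k) (Phi u (Suc k)) \<and> length (Phi u k) < length (Phi u (Suc k))"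
      using Good_Phi_step[of u k] zL[of "T + Suc k"] pz[of "T + Suc k"] G by (simp add: u_def T_def)
    moreover have "Phi u k = phk k" using A[of k "T + Suc k"] by (simp add: u_def)
    moreover have "Phi u (Suc k) = phk (Suc k)" by (simp add: u_def phk_def)
    ultimately show ?thesis by simp
  qed
  have chain: "prefix (phk a) (phk b)" if "a \<le> b" for a b
    using that
  proof (induction b rule: dec_induct)
    case base then show ?case by simp
  next
    case (step b) then show ?case using C[of b] by (auto intro: prefix_order.trans)
  qed
  have lenk: "k \<le> length (phk k)" for k
  proof (induction k)
    case 0 then show ?case by simp
  next
    case (Suc k) then show ?case using C[of k] by simp
  qed
  define f where "f j = phk (Suc j) ! j" for j
  have D: "f j = phk k ! j" if "j < length (phk k)" for j k
  proof -
    let ?M = "max k (Suc j)"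
    have "phk (Suc j) ! j = phk ?M ! j"
      by (rule prefix_nth[OF chain]) (use lenk[of "Suc j"] in auto)
    moreover have "phk k ! j = phk ?M ! j"
      by (rule prefix_nth[OF chain]) (use that in auto)
    ultimately show ?thesis by (simp add: f_def)
  qed
  have rf: "restr f n = take n (phk k)" if "n \<le> length (phk k)" for n k
    by (rule nth_equalityI) (use that in \<open>auto simp: restr_def D\<close>)
  have dom0: "dom (s (restr f 0)) = dom (s [])" by (simp add: restr_def)
  have domS: "dom (s (restr f (Suc a))) = w (restr f a)" for a
    using ns unfolding nice_system_def by (simp add: restr_Suc)
  have uniq: "a = b" if "i \<in> dom (s (restr f a))" "i \<in> dom (s (restr f b))" for i a b
  proof -
    have disj: "dom (s []) \<inter> w (restr f n) = {}" "n \<noteq> m \<longrightarrow> w (restr f n) \<inter> w (restr f m) = {}"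
      for n m using ns unfolding nice_system_def by blast+
    show ?thesis
    proof (cases a)
      case 0
      show ?thesis
      proof (cases b)
        case (Suc b') then show ?thesis using that 0 dom0 domS disj(1)[of b'] by auto
      qed (simp add: 0)
    next
      case (Suc a')
      show ?thesis
      proof (cases b)
        case 0 then show ?thesis using that Suc dom0 domS disj(1)[of a'] by auto
      next
        case (Suc b') then show ?thesis using that \<open>a = Suc a'\<close> domS disj(2)[of a' b'] by auto
      qed
    qed
  qed
  define y where "y i = the (s (restr f (LEAST n. i \<in> dom (s (restr f n)))) i)" for i
  have E: "y i = v" if "s (restr f n) i = Some v" for i n v
  proof -
    have "i \<in> dom (s (restr f n))" using that by auto
    then have "i \<in> dom (s (restr f (LEAST n. i \<in> dom (s (restr f n)))))" by (rule LeastI)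
    then have "(LEAST n. i \<in> dom (s (restr f n))) = n"
      using uniq \<open>i \<in> dom (s (restr f n))\<close> by blast
    then show ?thesis using that by (simp add: y_def)
  qed
  have yN: "y \<in> nice_set s"
    unfolding nice_set_def
  proof (intro CollectI exI[of _ f] allI impI)
    fix n i assume "i \<in> dom (s (restr f n))"
    then obtain v where "s (restr f n) i = Some v" by auto
    then show "s (restr f n) i = Some (y i)" using E by simp
  qed
  have F: "y (zpos z j) = z j" for j
  proof -
    have G: "Good (restr z (T + Suc j)) (phk (Suc j))" by (rule B)
    have jl: "j < length (restr z (T + Suc j))" by simp
    have lp: "lpos (restr z (T + Suc j)) j = zpos z j" by (rule lpos_restr) simp
    have zj: "restr z (T + Suc j) ! j = z j" by (simp add: restr_def nth_append del: upt_Suc)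
    note H = conjunct1[OF G[unfolded Good_def], rule_format, OF jl]
    from H[unfolded lp zj] have "(zpos z j \<in> dom (s []) \<and> s [] (zpos z j) = Some (z j)) \<or>
       (\<exists>n<length (phk (Suc j)). zpos z j \<in> w (take n (phk (Suc j))) \<and>
          s (take (Suc n) (phk (Suc j))) (zpos z j) = Some (z j))" .
    then show ?thesis
    proof
      assume "zpos z j \<in> dom (s []) \<and> s [] (zpos z j) = Some (z j)"
      then have "s (restr f 0) (zpos z j) = Some (z j)" by (simp add: restr_def)
      then show ?thesis by (rule E)
    next
      assume "\<exists>n<length (phk (Suc j)). zpos z j \<in> w (take n (phk (Suc j))) \<and>
          s (take (Suc n) (phk (Suc j))) (zpos z j) = Some (z j)"
      then obtain n where n: "n < length (phk (Suc j))"
        "s (take (Suc n) (phk (Suc j))) (zpos z j) = Some (z j)" by blast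
      have "take (Suc n) (phk (Suc j)) = restr f (Suc n)" using rf[of "Suc n" "Suc j"] n(1) by simp
      then show ?thesis using n(2) E by simp
    qed
  qed
  have yp: "ypos y j = zpos z j" for j
    by (induction j) (simp_all add: F)
  have "HH y = z" by (rule ext) (simp add: HH_def yp F)
  then show "z \<in> HH ` nice_set s" using yN by blast
qed

end
end

lemma laver_from_nice:
  assumes ns: "nice_system w s"
  shows "\<exists>L. laver_tree L \<and> tree_body L \<subseteq> HH ` nice_set s"
proof -
  obtain t0 \<phi>0 where g: "Good w s t0 \<phi>0" using stem_ex[OF ns] by blast
  show ?thesis using LL_laver[OF ns g] LL_body[OF ns g] by blast
qed

theorem proposition3p7:
  fixes \<Gamma> :: "(nat \<Rightarrow> nat) set set"
  assumes "topologically_reasonable \<Gamma>"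
    and "\<forall>A\<in>\<Gamma>. strongly_u_regular A"
  shows "\<forall>A\<in>\<Gamma>. ell_regular A"
proof
  fix A assume AG: "A \<in> \<Gamma>"
  show "ell_regular A"
  proof (cases "strongly_dominating A")
    case False then show ?thesis by (simp add: ell_regular_def)
  next
    case True
    have BG: "HH -` A \<in> \<Gamma>" using assms(1) AG HH_cont unfolding topologically_reasonable_def by blast
    have "dominating (HH -` A)" using True by (rule dom_lemma)
    then obtain w s where ns: "nice_system w s" and sub: "nice_set s \<subseteq> HH -` A"
      using assms(2) BG unfolding strongly_u_regular_def by blast
    obtain L where L: "laver_tree L" "tree_body L \<subseteq> HH ` nice_set s"
      using laver_from_nice[OF ns] by blast
    have "HH ` nice_set s \<subseteq> A" using sub by blast
    then show ?thesis using L unfolding ell_regular_def by blast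
  qed
qed

end
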